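(* Let $F$ be a heavy-tailed distribution on $[0,\infty)$ with mean $a\in(0,\infty]$. Then $$\liminf_{x\to\infty}\frac{1}{\overline{F}(x)}\int_0^x\overline{F}(x-y)\overline{F}(y)\,dy=2a.$$
   Context: $\overline{F}(x)=F(x,\infty)$, positive for all $x$. $F$ is heavy-tailed if $\int_0^\infty e^{\gamma x}F(dx)=\infty$ for every $\gamma>0$. *)

theory Defs
  imports "HOL-Probability.Probability"
begin

definition Fbar :: "real measure \<Rightarrow> real \<Rightarrow> real" where
  "Fbar F x = measure F {x<..}"

definition heavy_tailed :: "real measure \<Rightarrow> bool" where
  "heavy_tailed F \<longleftrightarrow> (\<forall>\<gamma>>0. (\<integral>\<^sup>+ x. ennreal (exp (\<gamma> * x)) \<partial>F) = \<infinity>)"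

definition mean :: "real measure \<Rightarrow> ennreal" where
  "mean F = (\<integral>\<^sup>+ x. ennreal x \<partial>F)"

end

theory Submission
  imports Defs
begin


lemma conv_square:
  fixes h :: "real \<Rightarrow> ennreal"
  assumes [measurable]: "h \<in> borel_measurable borel"
  shows "(\<integral>\<^sup>+x. (\<integral>\<^sup>+y. h (x - y) * h y \<partial>lborel) \<partial>lborel) = (\<integral>\<^sup>+y. h y \<partial>lborel)^2"
proof -
  have "(\<integral>\<^sup>+x. (\<integral>\<^sup>+y. h (x - y) * h y \<partial>lborel) \<partial>lborel) = (\<integral>\<^sup>+y. (\<integral>\<^sup>+x. h (x - y) * h y \<partial>lborel) \<partial>lborel)"
    by (rule lborel_pair.Fubini'[symmetric]) measurable
  also have "\<dots> = (\<integral>\<^sup>+y. (\<integral>\<^sup>+x. h x \<partial>lborel) * h y \<partial>lborel)"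
  proof (rule nn_integral_cong)
    fix y :: real
    have "(\<integral>\<^sup>+x. h x \<partial>lborel) = \<bar>1::real\<bar> * (\<integral>\<^sup>+x. h (- y + 1 * x) \<partial>lborel)"
      by (rule nn_integral_real_affine) auto
    then have "(\<integral>\<^sup>+x. h x \<partial>lborel) = (\<integral>\<^sup>+x. h (x - y) \<partial>lborel)" by simp
    then show "(\<integral>\<^sup>+x. h (x - y) * h y \<partial>lborel) = (\<integral>\<^sup>+x. h x \<partial>lborel) * h y"
      by (simp add: nn_integral_multc)
  qed
  also have "\<dots> = (\<integral>\<^sup>+y. h y \<partial>lborel)^2"
    by (simp add: nn_integral_cmult power2_eq_square)
  finally show ?thesis .
qed

lemma bridge:
  fixes h :: "real \<Rightarrow> real"
  assumes [measurable]: "h \<in> borel_measurable borel" and nn: "\<And>y. 0 \<le> h y"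
    and bd: "\<And>y. y \<in> {a..b} \<Longrightarrow> h y \<le> K"
  shows "h integrable_on {a..b}"
    and "(\<integral>\<^sup>+y. ennreal (h y) * indicator {a..b} y \<partial>lborel) = ennreal (integral {a..b} h)"
proof -
  let ?N = "(\<integral>\<^sup>+y. ennreal (h y) * indicator {a..b} y \<partial>lborel)"
  have "?N \<le> (\<integral>\<^sup>+y. ennreal K * indicator {a..b} y \<partial>lborel)"
    by (intro nn_integral_mono) (auto intro!: ennreal_leI bd split: split_indicator)
  also have "\<dots> = ennreal K * emeasure lborel {a..b}" by (simp add: nn_integral_cmult_indicator)
  also have "\<dots> < \<infinity>" using emeasure_lborel_cbox_finite[of a b]
    by (simp add: ennreal_mult_less_top)
  finally have fin: "?N < \<infinity>" .
  define r where "r = enn2real ?N"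
  have Nr: "?N = ennreal r" using fin unfolding r_def by (simp add: less_top)
  have "((\<lambda>y. indicator {a..b} y * h y) has_integral r) UNIV"
  proof (rule nn_integral_has_integral)
    show "(\<integral>\<^sup>+x. ennreal (indicator {a..b} x * h x) \<partial>lborel) = ennreal r"
      using Nr by (simp add: ennreal_mult' mult_ac nn ennreal_indicator)
  qed (auto simp: nn r_def)
  then have "((\<lambda>y. if y \<in> {a..b} then h y else 0) has_integral r) UNIV"
  proof (rule has_integral_eq[rotated])
    show "indicator {a..b} y * h y = (if y \<in> {a..b} then h y else 0)" for y
      by (simp split: split_indicator)
  qed
  then have hi: "(h has_integral r) {a..b}" by (simp only: has_integral_restrict_UNIV)
  then show "h integrable_on {a..b}" by blast
  show "?N = ennreal (integral {a..b} h)" using hi Nr by (simp add: integral_unique)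
qed



locale tailsetup =
  fixes F :: "real measure"
  assumes ps: "prob_space F"
    and sF: "sets F = sets borel"
    and neg0: "emeasure F {..<0} = 0"
begin

abbreviation "f \<equiv> Fbar F"

lemma sp[simp]: "space F = UNIV"
  using sF by (metis sets_eq_imp_space_eq space_borel)

lemma meas_F[measurable_cong]: "sets F = sets borel" by (rule sF)

lemma f_nonneg: "0 \<le> f x" unfolding Fbar_def by simp

lemma f_le1: "f x \<le> 1"
  unfolding Fbar_def using prob_space.prob_le_1[OF ps] by simp

lemma f_anti: "x \<le> y \<Longrightarrow> f y \<le> f x"
  unfolding Fbar_def
  by (intro finite_measure.finite_measure_mono[OF prob_space.axioms(1)[OF ps]]) (auto simp: sF)

lemma f_emeasure: "emeasure F {x<..} = ennreal (f x)"
  unfolding Fbar_def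
  by (intro finite_measure.emeasure_eq_measure[OF prob_space.axioms(1)[OF ps]])

lemma f_meas[measurable]: "f \<in> borel_measurable borel"
proof -
  have "mono (\<lambda>x. - f x)" by (auto simp: mono_def intro: f_anti)
  then have "(\<lambda>x. - f x) \<in> borel_measurable borel" by (rule borel_measurable_mono)
  then have "(\<lambda>x. - (- f x)) \<in> borel_measurable borel" by measurable
  then show ?thesis by simp
qed

lemma sets_FL[measurable_cong]: "sets (F \<Otimes>\<^sub>M lborel) = sets (borel \<Otimes>\<^sub>M borel)"
  by (intro sets_pair_measure_cong) (auto simp: sF)

lemma sets_LF[measurable_cong]: "sets (lborel \<Otimes>\<^sub>M F) = sets (borel \<Otimes>\<^sub>M borel)"
  by (intro sets_pair_measure_cong) (auto simp: sF)

lemma emF1[simp]: "emeasure F UNIV = 1"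
  using prob_space.emeasure_space_1[OF ps] by simp

lemma psf: "pair_sigma_finite lborel F"
proof -
  interpret prob_space F by (rule ps)
  show ?thesis by (intro pair_sigma_finite.intro) unfold_locales
qed

lemma LC:
  assumes [measurable]: "h \<in> borel_measurable borel"
  shows "(\<integral>\<^sup>+x. (\<integral>\<^sup>+t. ennreal (h t) * indicator {0..<x} t \<partial>lborel) \<partial>F)
       = (\<integral>\<^sup>+t. ennreal (h t) * ennreal (f t) * indicator {0..} t \<partial>lborel)"
proof -
  have "(\<integral>\<^sup>+x. (\<integral>\<^sup>+t. ennreal (h t) * indicator {0..<x} t \<partial>lborel) \<partial>F)
      = (\<integral>\<^sup>+t. (\<integral>\<^sup>+x. ennreal (h t) * indicator {0..<x} t \<partial>F) \<partial>lborel)"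
  proof (rule pair_sigma_finite.Fubini'[OF psf])
    have "(\<lambda>(t,x). ennreal (h t) * indicator {0..<x} t) = (\<lambda>p. ennreal (h (fst p)) * indicator {p. 0 \<le> fst p \<and> fst p < snd p} p)"
      by (auto simp: fun_eq_iff split: split_indicator)
    also have "\<dots> \<in> borel_measurable (lborel \<Otimes>\<^sub>M F)"
    proof -
      have "{p::real\<times>real. 0 \<le> fst p \<and> fst p < snd p} \<in> sets (lborel \<Otimes>\<^sub>M F)"
      proof -
        have "{p\<in>space (borel \<Otimes>\<^sub>M borel). 0 \<le> fst p \<and> fst p < (snd p::real)} \<in> sets (borel \<Otimes>\<^sub>M borel)" by measurable
        then have "{p::real\<times>real. 0 \<le> fst p \<and> fst p < snd p} \<in> sets (borel \<Otimes>\<^sub>M borel)"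
          by (simp add: space_pair_measure)
        moreover have "sets (lborel \<Otimes>\<^sub>M F) = sets (borel \<Otimes>\<^sub>M borel)"
          by (intro sets_pair_measure_cong) (auto simp: sF)
        ultimately show ?thesis by simp
      qed
      then show ?thesis by measurable
    qed
    finally show "(\<lambda>(t,x). ennreal (h t) * indicator {0..<x} t) \<in> borel_measurable (lborel \<Otimes>\<^sub>M F)" .
  qed
  also have "\<dots> = (\<integral>\<^sup>+t. ennreal (h t) * ennreal (f t) * indicator {0..} t \<partial>lborel)"
  proof (rule nn_integral_cong)
    fix t :: real
    have "(\<integral>\<^sup>+x. ennreal (h t) * indicator {0..<x} t \<partial>F) = (\<integral>\<^sup>+x. (ennreal (h t) * indicator {0..} t) * indicator {t<..} x \<partial>F)"
      by (intro nn_integral_cong) (auto split: split_indicator)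
    also have "\<dots> = ennreal (h t) * indicator {0..} t * emeasure F {t<..}"
      by (rule nn_integral_cmult_indicator) (simp add: sF)
    finally show "(\<integral>\<^sup>+x. ennreal (h t) * indicator {0..<x} t \<partial>F) = ennreal (h t) * ennreal (f t) * indicator {0..} t"
      by (simp add: f_emeasure mult_ac)
  qed
  finally show ?thesis .
qed

lemma mean_eq: "mean F = (\<integral>\<^sup>+t. ennreal (f t) * indicator {0..} t \<partial>lborel)"
proof -
  have "mean F = (\<integral>\<^sup>+x. (\<integral>\<^sup>+t. ennreal 1 * indicator {0..<x} t \<partial>lborel) \<partial>F)"
    unfolding mean_def
  proof (intro nn_integral_cong)
    fix x :: real
    show "ennreal x = (\<integral>\<^sup>+t. ennreal 1 * indicator {0..<x} t \<partial>lborel)"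
      by (cases "0 \<le> x") (auto simp: ennreal_neg)
  qed
  also have "\<dots> = (\<integral>\<^sup>+t. ennreal (f t) * indicator {0..} t \<partial>lborel)"
    by (subst LC) auto
  finally show ?thesis .
qed

lemma heavy_int:
  assumes "heavy_tailed F" "\<gamma> > 0"
  shows "(\<integral>\<^sup>+t. ennreal (exp (\<gamma> * t) * f t) * indicator {0..} t \<partial>lborel) = \<infinity>"
proof -
  have "\<infinity> = (\<integral>\<^sup>+ x. ennreal (exp (\<gamma> * x)) \<partial>F)"
    using assms unfolding heavy_tailed_def by auto
  also have "\<dots> \<le> (\<integral>\<^sup>+x. 1 + (\<integral>\<^sup>+t. ennreal (\<gamma> * exp (\<gamma> * t)) * indicator {0..<x} t \<partial>lborel) \<partial>F)"
  proof (intro nn_integral_mono)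
    fix x :: real
    show "ennreal (exp (\<gamma> * x)) \<le> 1 + (\<integral>\<^sup>+t. ennreal (\<gamma> * exp (\<gamma> * t)) * indicator {0..<x} t \<partial>lborel)"
    proof (cases "0 \<le> x")
      case False
      then have "exp (\<gamma> * x) \<le> 1" using assms by (simp add: mult_le_0_iff)
      then show ?thesis by (simp add: add_increasing2)
    next
      case True
      have "(\<integral>\<^sup>+t. ennreal (\<gamma> * exp (\<gamma> * t)) * indicator {0..<x} t \<partial>lborel)
          = (\<integral>\<^sup>+t. ennreal (\<gamma> * exp (\<gamma> * t)) * indicator {0..x} t \<partial>lborel)"
        by (intro nn_integral_cong_AE) (use AE_lborel_singleton[of x] in eventually_elim, auto split: split_indicator)
      also have "\<dots> = exp (\<gamma> * x) - exp (\<gamma> * 0)"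
        by (rule nn_integral_FTC_Icc) (use True assms in \<open>auto intro!: derivative_eq_intros\<close>)
      finally have eq: "(\<integral>\<^sup>+t. ennreal (\<gamma> * exp (\<gamma> * t)) * indicator {0..<x} t \<partial>lborel) = ennreal (exp (\<gamma> * x) - 1)"
        by simp
      have "1 \<le> exp (\<gamma> * x)" using True assms by simp
      then have "ennreal (exp (\<gamma> * x)) = 1 + ennreal (exp (\<gamma> * x) - 1)"
        using ennreal_plus[of 1 "exp (\<gamma> * x) - 1"] by simp
      then show ?thesis using eq by simp
    qed
  qed
  also have "\<dots> = 1 + (\<integral>\<^sup>+x. (\<integral>\<^sup>+t. ennreal (\<gamma> * exp (\<gamma> * t)) * indicator {0..<x} t \<partial>lborel) \<partial>F)"
  proof (subst nn_integral_add)
    have "(\<lambda>(x,t). ennreal (\<gamma> * exp (\<gamma> * t)) * indicator {0..<x} t) = (\<lambda>p. ennreal (\<gamma> * exp (\<gamma> * snd p)) * indicator {p. 0 \<le> snd p \<and> snd p < fst p} p)"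
      by (auto simp: fun_eq_iff split: split_indicator)
    also have "\<dots> \<in> borel_measurable (F \<Otimes>\<^sub>M lborel)"
    proof -
      have "{p\<in>space (borel \<Otimes>\<^sub>M borel). 0 \<le> snd p \<and> snd p < (fst p::real)} \<in> sets (borel \<Otimes>\<^sub>M borel)" by measurable
      then have "{p::real\<times>real. 0 \<le> snd p \<and> snd p < fst p} \<in> sets (F \<Otimes>\<^sub>M lborel)"
        by (simp add: space_pair_measure sets_FL)
      then show ?thesis by measurable
    qed
    finally show "(\<lambda>x. \<integral>\<^sup>+t. ennreal (\<gamma> * exp (\<gamma> * t)) * indicator {0..<x} t \<partial>lborel) \<in> borel_measurable F"
      by (rule lborel.borel_measurable_nn_integral)
  qed auto
  also have "\<dots> = 1 + (\<integral>\<^sup>+t. ennreal (\<gamma> * exp (\<gamma> * t)) * ennreal (f t) * indicator {0..} t \<partial>lborel)"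
    by (subst LC) auto
  also have "\<dots> = 1 + \<gamma> * (\<integral>\<^sup>+t. ennreal (exp (\<gamma> * t) * f t) * indicator {0..} t \<partial>lborel)"
  proof -
    have "\<And>t. ennreal (\<gamma> * exp (\<gamma> * t)) * ennreal (f t) = ennreal \<gamma> * ennreal (exp (\<gamma> * t) * f t)"
      using assms f_nonneg by (simp add: ennreal_mult[symmetric] mult_ac)
    then show ?thesis
      by (subst nn_integral_cmult[symmetric]) (auto simp: mult_ac intro!: nn_integral_cong)
  qed
  finally show ?thesis by (auto simp: top_unique ennreal_mult_eq_top_iff)
qed

end


context tailsetup
begin

definition g :: "real \<Rightarrow> real \<Rightarrow> real" where "g \<gamma> t = exp (\<gamma> * t) * f t"
definition N :: "real \<Rightarrow> real \<Rightarrow> ennreal" where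
  "N \<gamma> X = (\<integral>\<^sup>+t. ennreal (g \<gamma> t) * indicator {0..X} t \<partial>lborel)"
definition J :: "real \<Rightarrow> real \<Rightarrow> ennreal" where
  "J \<gamma> x = (\<integral>\<^sup>+y. ennreal (g \<gamma> (x - y)) * ennreal (g \<gamma> y) * indicator {0..x} y \<partial>lborel)"
definition I :: "real \<Rightarrow> real" where
  "I x = integral {0..x} (\<lambda>y. f (x - y) * f y)"

lemma g_meas[measurable]: "g \<gamma> \<in> borel_measurable borel"
  unfolding g_def by measurable

lemma g_nonneg: "0 \<le> g \<gamma> t" unfolding g_def by (simp add: f_nonneg)

lemma g0[simp]: "g 0 t = f t" unfolding g_def by simp
lemma g0f[simp]: "g 0 = f" by (rule ext) simp

lemma J_meas[measurable]: "J \<gamma> \<in> borel_measurable borel"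
proof -
  have "(\<lambda>(x,y). ennreal (g \<gamma> (x - y)) * ennreal (g \<gamma> y) * indicator {0..x} y)
        = (\<lambda>p. ennreal (g \<gamma> (fst p - snd p)) * ennreal (g \<gamma> (snd p)) * indicator {p. 0 \<le> snd p \<and> snd p \<le> fst p} p)"
    by (auto simp: fun_eq_iff split: split_indicator)
  also have "\<dots> \<in> borel_measurable (lborel \<Otimes>\<^sub>M lborel)"
  proof -
    have "{p\<in>space (borel \<Otimes>\<^sub>M borel). 0 \<le> snd p \<and> snd p \<le> (fst p::real)} \<in> sets (borel \<Otimes>\<^sub>M borel)" by measurable
    then have "{p::real\<times>real. 0 \<le> snd p \<and> snd p \<le> fst p} \<in> sets (lborel \<Otimes>\<^sub>M lborel)"
      by (simp add: space_pair_measure)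
    then show ?thesis by measurable
  qed
  finally have "(\<lambda>x. \<integral>\<^sup>+y. ennreal (g \<gamma> (x - y)) * ennreal (g \<gamma> y) * indicator {0..x} y \<partial>lborel) \<in> borel_measurable lborel"
    by (rule lborel.borel_measurable_nn_integral)
  then show ?thesis unfolding J_def[abs_def] by simp
qed

lemma J0_I: assumes "0 \<le> x" shows "J 0 x = ennreal (I x)"
proof -
  have "J 0 x = (\<integral>\<^sup>+y. ennreal (f (x - y) * f y) * indicator {0..x} y \<partial>lborel)"
    unfolding J_def by (simp add: ennreal_mult f_nonneg)
  also have "\<dots> = ennreal (I x)" unfolding I_def
  proof (rule bridge(2))
    show "f (x - y) * f y \<le> 1" for y using f_le1[of "x-y"] f_le1[of y] f_nonneg[of y]
      by (simp add: mult_le_one)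
  qed (auto simp: f_nonneg)
  finally show ?thesis .
qed

lemma Jg: "J \<gamma> x = ennreal (exp (\<gamma> * x)) * J 0 x"
proof -
  have e: "ennreal (g \<gamma> (x - y)) * ennreal (g \<gamma> y) = ennreal (exp (\<gamma> * x)) * (ennreal (g 0 (x - y)) * ennreal (g 0 y))" for y
  proof -
    have "exp (\<gamma> * (x - y)) * exp (\<gamma> * y) = exp (\<gamma> * x)"
      by (simp add: exp_add[symmetric] algebra_simps)
    then have "g \<gamma> (x - y) * g \<gamma> y = exp (\<gamma> * x) * (g 0 (x - y) * g 0 y)"
      unfolding g_def by (metis (no_types, lifting) ab_semigroup_mult_class.mult_ac(1) mult.left_commute mult_1 exp_zero mult_zero_left)
    then show ?thesis by (simp add: ennreal_mult[symmetric] g_nonneg f_nonneg)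
  qed
  show ?thesis unfolding J_def
    by (subst nn_integral_cmult[symmetric], measurable) (rule nn_integral_cong, subst e, simp only: mult_ac)
qed

lemma J_mono: assumes "0 \<le> \<gamma>" "0 \<le> x" shows "J 0 x \<le> J \<gamma> x"
proof -
  have "J 0 x = 1 * J 0 x" by simp
  also have "\<dots> \<le> ennreal (exp (\<gamma> * x)) * J 0 x"
    using assms by (intro mult_right_mono) auto
  finally show ?thesis by (simp add: Jg[of \<gamma>])
qed

lemma conv_upper: "(\<integral>\<^sup>+x. J \<gamma> x * indicator {0..X} x \<partial>lborel) \<le> (N \<gamma> X)^2"
proof -
  let ?h = "\<lambda>t. ennreal (g \<gamma> t) * indicator {0..X} t"
  have "(\<integral>\<^sup>+x. J \<gamma> x * indicator {0..X} x \<partial>lborel) = (\<integral>\<^sup>+x. (\<integral>\<^sup>+y. ennreal (g \<gamma> (x - y)) * ennreal (g \<gamma> y) * indicator {0..x} y * indicator {0..X} x \<partial>lborel) \<partial>lborel)"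
    unfolding J_def by (intro nn_integral_cong, subst nn_integral_multc) auto
  also have "\<dots> \<le> (\<integral>\<^sup>+x. (\<integral>\<^sup>+y. ?h (x - y) * ?h y \<partial>lborel) \<partial>lborel)"
    by (intro nn_integral_mono) (auto split: split_indicator)
  also have "\<dots> = (N \<gamma> X)^2" unfolding N_def by (rule conv_square) measurable
  finally show ?thesis .
qed

lemma conv_lower: "(N \<gamma> (X/2))^2 \<le> (\<integral>\<^sup>+x. J \<gamma> x * indicator {0..X} x \<partial>lborel)"
proof -
  let ?h = "\<lambda>t. ennreal (g \<gamma> t) * indicator {0..X/2} t"
  have "(\<integral>\<^sup>+x. J \<gamma> x * indicator {0..X} x \<partial>lborel) = (\<integral>\<^sup>+x. (\<integral>\<^sup>+y. ennreal (g \<gamma> (x - y)) * ennreal (g \<gamma> y) * indicator {0..x} y * indicator {0..X} x \<partial>lborel) \<partial>lborel)"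
    unfolding J_def by (intro nn_integral_cong, subst nn_integral_multc) auto
  moreover have "(\<integral>\<^sup>+x. (\<integral>\<^sup>+y. ?h (x - y) * ?h y \<partial>lborel) \<partial>lborel) \<le> (\<integral>\<^sup>+x. (\<integral>\<^sup>+y. ennreal (g \<gamma> (x - y)) * ennreal (g \<gamma> y) * indicator {0..x} y * indicator {0..X} x \<partial>lborel) \<partial>lborel)"
    by (intro nn_integral_mono) (auto split: split_indicator)
  moreover have "(\<integral>\<^sup>+x. (\<integral>\<^sup>+y. ?h (x - y) * ?h y \<partial>lborel) \<partial>lborel) = (N \<gamma> (X/2))^2" unfolding N_def by (rule conv_square) measurable
  ultimately show ?thesis by simp
qed

lemma N_SUP: "(\<integral>\<^sup>+t. ennreal (g \<gamma> t) * indicator {0..} t \<partial>lborel) = (SUP n::nat. N \<gamma> (real n))"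
proof -
  have "(\<integral>\<^sup>+t. ennreal (g \<gamma> t) * indicator {0..} t \<partial>lborel) = (\<integral>\<^sup>+t. (SUP n::nat. ennreal (g \<gamma> t) * indicator {0..real n} t) \<partial>lborel)"
  proof (rule nn_integral_cong)
    fix t :: real
    show "ennreal (g \<gamma> t) * indicator {0..} t = (SUP n::nat. ennreal (g \<gamma> t) * indicator {0..real n} t)"
    proof (rule antisym)
      show "(SUP n::nat. ennreal (g \<gamma> t) * indicator {0..real n} t) \<le> ennreal (g \<gamma> t) * indicator {0..} t"
        by (intro SUP_least) (auto split: split_indicator)
      obtain n :: nat where "t \<le> real n" using real_arch_simple by blast
      then show "ennreal (g \<gamma> t) * indicator {0..} t \<le> (SUP n::nat. ennreal (g \<gamma> t) * indicator {0..real n} t)"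
        by (intro SUP_upper2[of n]) (auto split: split_indicator)
    qed
  qed
  also have "\<dots> = (SUP n::nat. N \<gamma> (real n))"
    unfolding N_def
    by (rule nn_integral_monotone_convergence_SUP) (auto simp: incseq_def le_fun_def split: split_indicator)
  finally show ?thesis .
qed

lemma mean_N: "mean F = (SUP n::nat. N 0 (real n))"
  using mean_eq N_SUP[of 0] by simp

lemma N_heavy: "heavy_tailed F \<Longrightarrow> 0 < \<gamma> \<Longrightarrow> (SUP n::nat. N \<gamma> (real n)) = \<infinity>"
  using heavy_int N_SUP unfolding g_def by simp

lemma N_mono: "X \<le> Y \<Longrightarrow> N \<gamma> X \<le> N \<gamma> Y"
  unfolding N_def by (intro nn_integral_mono) (auto split: split_indicator)

lemma g_bound: assumes "0 \<le> \<gamma>" "t \<in> {0..X}" shows "g \<gamma> t \<le> exp (\<gamma> * X)"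
proof -
  have "exp (\<gamma> * t) \<le> exp (\<gamma> * X)" using assms by (auto intro: mult_left_mono)
  then show ?thesis unfolding g_def using f_le1[of t] f_nonneg[of t]
    by (metis exp_ge_zero mult_mono mult.right_neutral)
qed

lemma g_int: "0 \<le> \<gamma> \<Longrightarrow> g \<gamma> integrable_on {0..X}"
  using bridge(1)[of "g \<gamma>" 0 X] g_bound g_nonneg by (metis g_meas)

lemma N_HK: "0 \<le> \<gamma> \<Longrightarrow> N \<gamma> X = ennreal (integral {0..X} (g \<gamma>))"
  unfolding N_def using bridge(2)[of "g \<gamma>" 0 X] g_bound g_nonneg by (metis g_meas)

lemma I_lower:
  assumes "0 \<le> A" "2 * A < x"
  shows "2 * ennreal (f x) * N 0 A \<le> ennreal (I x)"
proof -
  let ?k = "\<lambda>y. ennreal (f (x - y)) * ennreal (f y)"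
  have x0: "0 \<le> x" using assms by simp
  have "ennreal (f x) * N 0 A = (\<integral>\<^sup>+y. ennreal (f x) * ennreal (f y) * indicator {0..A} y \<partial>lborel)"
    unfolding N_def by (subst nn_integral_cmult[symmetric]) (auto simp: mult_ac)
  also have "\<dots> \<le> (\<integral>\<^sup>+y. ?k y * indicator {0..A} y \<partial>lborel)"
    by (intro nn_integral_mono) (auto intro!: mult_right_mono ennreal_leI f_anti split: split_indicator)
  finally have 1: "ennreal (f x) * N 0 A \<le> (\<integral>\<^sup>+y. ?k y * indicator {0..A} y \<partial>lborel)" .
  have "(\<integral>\<^sup>+y. ?k y * indicator {x-A..x} y \<partial>lborel) = \<bar>-1::real\<bar> * (\<integral>\<^sup>+y. ?k (x + -1 * y) * indicator {x-A..x} (x + -1 * y) \<partial>lborel)"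
    by (rule nn_integral_real_affine) auto
  also have "\<dots> = (\<integral>\<^sup>+y. ?k y * indicator {0..A} y \<partial>lborel)"
    by (simp, intro nn_integral_cong) (auto simp: mult_ac split: split_indicator)
  finally have 2: "(\<integral>\<^sup>+y. ?k y * indicator {x-A..x} y \<partial>lborel) = (\<integral>\<^sup>+y. ?k y * indicator {0..A} y \<partial>lborel)" .
  have "2 * ennreal (f x) * N 0 A \<le> (\<integral>\<^sup>+y. ?k y * indicator {0..A} y \<partial>lborel) + (\<integral>\<^sup>+y. ?k y * indicator {x-A..x} y \<partial>lborel)"
    using 1 2 by (simp add: mult_2 add_mono distrib_right)
  also have "\<dots> = (\<integral>\<^sup>+y. ?k y * indicator {0..A} y + ?k y * indicator {x-A..x} y \<partial>lborel)"
    by (subst nn_integral_add) auto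
  also have "\<dots> \<le> (\<integral>\<^sup>+y. ?k y * indicator {0..x} y \<partial>lborel)"
    using assms by (intro nn_integral_mono) (auto split: split_indicator)
  also have "\<dots> = J 0 x" unfolding J_def by simp
  also have "\<dots> = ennreal (I x)" using J0_I[OF x0] .
  finally show ?thesis .
qed

lemma I_int: "(\<lambda>y. f (x - y) * f y) integrable_on {0..x}"
proof (rule bridge(1))
  show "f (x - y) * f y \<le> 1" for y using f_le1[of "x-y"] f_le1[of y] f_nonneg[of y]
    by (simp add: mult_le_one)
qed (auto simp: f_nonneg)

lemma I_nonneg: "0 \<le> I x"
  unfolding I_def by (rule integral_nonneg[OF I_int]) (simp add: f_nonneg)

lemma liminf_lower:
  assumes fpos: "\<And>x. f x > 0"
  shows "2 * enn2ereal (mean F) \<le> Liminf at_top (\<lambda>x. ereal (I x / f x))"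
proof (unfold le_Liminf_iff, intro allI impI)
  fix y assume y: "y < 2 * enn2ereal (mean F)"
  show "eventually (\<lambda>x. y < ereal (I x / f x)) at_top"
  proof (cases "y < 0")
    case True
    have "(0::ereal) \<le> ereal (I x / f x)" for x using I_nonneg[of x] fpos[of x] by simp
    then have "y < ereal (I x / f x)" for x using True by (meson less_le_trans)
    then show ?thesis by simp
  next
    case False
    then obtain r where r: "y = ereal r" "0 \<le> r" using y by (cases y) auto
    have "ereal (r/2) < enn2ereal (mean F)"
      using y r by (cases "enn2ereal (mean F)") (auto simp: field_simps)
    then have "ennreal (r/2) < mean F" using r by (simp add: less_ennreal.rep_eq)
    then obtain n :: nat where n: "ennreal (r/2) < N 0 (real n)" unfolding mean_N less_SUP_iff by blast
    define c where "c = integral {0..real n} f"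
    have Nc: "N 0 (real n) = ennreal c" unfolding c_def using N_HK[of 0 "real n"] by simp
    have rc: "r/2 < c" using n r by (simp add: Nc ennreal_less_iff)
    have "eventually (\<lambda>x. 2 * real n < x) at_top" by (rule eventually_gt_at_top)
    then show ?thesis
    proof eventually_elim
      case (elim x)
      have "2 * ennreal (f x) * N 0 (real n) \<le> ennreal (I x)" using I_lower[OF _ elim] by simp
      then have "ennreal (2 * f x * c) \<le> ennreal (I x)"
        using f_nonneg[of x] rc r by (simp add: Nc ennreal_mult)
      then have "2 * f x * c \<le> I x" using I_nonneg by simp
      then have "2 * c \<le> I x / f x" using fpos[of x] by (simp add: field_simps)
      then show ?case using rc r by simp
    qed
  qed
qed

lemma N_le_mean: "N 0 X \<le> mean F"
  unfolding mean_eq N_def by (intro nn_integral_mono) (auto split: split_indicator)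

lemma N_exp: assumes "0 \<le> \<gamma>" shows "N \<gamma> X \<le> ennreal (exp (\<gamma> * X)) * N 0 X"
proof -
  have "N \<gamma> X \<le> (\<integral>\<^sup>+t. ennreal (exp (\<gamma> * X)) * (ennreal (f t) * indicator {0..X} t) \<partial>lborel)"
    unfolding N_def
  proof (intro nn_integral_mono)
    fix t
    show "ennreal (g \<gamma> t) * indicator {0..X} t \<le> ennreal (exp (\<gamma> * X)) * (ennreal (f t) * indicator {0..X} t)"
    proof (cases "t \<in> {0..X}")
      case True
      then have "exp (\<gamma> * t) \<le> exp (\<gamma> * X)" using assms by (auto intro: mult_left_mono)
      then have "g \<gamma> t \<le> exp (\<gamma> * X) * f t" unfolding g_def using f_nonneg[of t] by (simp add: mult_right_mono)
      then show ?thesis using True by (simp add: ennreal_mult[symmetric] f_nonneg)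
    qed simp
  qed
  also have "\<dots> = ennreal (exp (\<gamma> * X)) * N 0 X"
    unfolding N_def by (subst nn_integral_cmult) auto
  finally show ?thesis .
qed

lemma liminf_upper:
  assumes fpos: "\<And>x. f x > 0" and ht: "heavy_tailed F"
    and mF: "mean F = ennreal Ar" and Ar0: "0 \<le> Ar" and mpos: "mean F > 0"
  shows "Liminf at_top (\<lambda>x. ereal (I x / f x)) \<le> ereal (2 * Ar)"
proof (rule ccontr)
  assume "\<not> ?thesis"
  then have "ereal (2 * Ar) < Liminf at_top (\<lambda>x. ereal (I x / f x))" by simp
  then obtain b where b1: "2 * Ar < b" and b2: "ereal b < Liminf at_top (\<lambda>x. ereal (I x / f x))"
    using ereal_dense2 by (metis ereal_less(2) less_ereal.simps(1))
  have "eventually (\<lambda>x. ereal b < ereal (I x / f x)) at_top"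
    using le_Liminf_iff[THEN iffD1, OF order_refl] b2 by blast
  then obtain x1 where x1: "\<And>x. x \<ge> x1 \<Longrightarrow> b < I x / f x"
    unfolding eventually_at_top_linorder by auto
  have bI: "b * f x < I x" if "x \<ge> x1" for x
    using x1[OF that] fpos[of x] by (simp add: field_simps)
  define \<epsilon> where "\<epsilon> = b - 2 * Ar"
  have \<epsilon>0: "0 < \<epsilon>" using b1 unfolding \<epsilon>_def by simp
  define \<delta> where "\<delta> = \<epsilon>^2 / (16 * Ar + 16)"
  have \<delta>0: "0 < \<delta>" unfolding \<delta>_def using \<epsilon>0 Ar0 by simp
  have "ennreal (Ar - \<delta>) < mean F"
  proof (cases "0 \<le> Ar - \<delta>")
    case True then show ?thesis using \<delta>0 mF by (simp add: ennreal_less_iff)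
  next
    case False then show ?thesis using mpos by (simp add: ennreal_neg)
  qed
  then obtain n0 :: nat where n0: "ennreal (Ar - \<delta>) < N 0 (real n0)" unfolding mean_N less_SUP_iff by blast
  define x0 where "x0 = max x1 (max (2 * real n0) 0)"
  have x0: "0 \<le> x0" "x1 \<le> x0" "real n0 \<le> x0 / 2" unfolding x0_def by auto
  define c0 where "c0 = integral {0..x0/2} f"
  have Nc0: "N 0 (x0/2) = ennreal c0" unfolding c0_def using N_HK[of 0 "x0/2"] by simp
  have c0nn: "0 \<le> c0" unfolding c0_def by (rule integral_nonneg[OF g_int[of 0, simplified]]) (auto simp: f_nonneg)
  have "ennreal (Ar - \<delta>) < ennreal c0" using n0 N_mono[OF x0(3), of 0] Nc0 by simp
  then have c0lo: "Ar - \<delta> < c0" using c0nn by (cases "0 \<le> Ar - \<delta>") (auto simp: ennreal_less_iff)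
  have "ennreal c0 \<le> ennreal Ar" using N_le_mean[of "x0/2"] Nc0 mF by simp
  then have c0hi: "c0 \<le> Ar" using Ar0 by simp
  define Cx where "Cx = integral {0..x0} f"
  have NCx: "N 0 x0 = ennreal Cx" unfolding Cx_def using N_HK[of 0 x0] by simp
  have Cxnn: "0 \<le> Cx" unfolding Cx_def by (rule integral_nonneg[OF g_int[of 0, simplified]]) (auto simp: f_nonneg)
  have "ennreal Cx \<le> ennreal Ar" using N_le_mean[of "x0"] NCx mF by simp
  then have Cxhi: "Cx \<le> Ar" using Ar0 by simp
  have "((\<lambda>\<gamma>. b * (exp (\<gamma> * x0) - 1) * Ar) \<longlongrightarrow> b * (exp (0 * x0) - 1) * Ar) (at_right 0)"
    by (intro tendsto_intros)
  then have ev1: "eventually (\<lambda>\<gamma>. b * (exp (\<gamma> * x0) - 1) * Ar < \<epsilon>^2/16) (at_right 0)"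
    using \<epsilon>0 by (intro order_tendstoD(2)) auto
  have "((\<lambda>\<gamma>. exp (\<gamma> * x0) * Ar) \<longlongrightarrow> exp (0 * x0) * Ar) (at_right 0)"
    by (intro tendsto_intros)
  then have ev2: "eventually (\<lambda>\<gamma>. exp (\<gamma> * x0) * Ar < Ar + \<epsilon>/2) (at_right 0)"
    using \<epsilon>0 by (intro order_tendstoD(2)) auto
  have "eventually (\<lambda>\<gamma>. b * (exp (\<gamma> * x0) - 1) * Ar < \<epsilon>^2/16 \<and> exp (\<gamma> * x0) * Ar < Ar + \<epsilon>/2) (at_right (0::real))"
    using ev1 ev2 by eventually_elim auto
  then obtain d where d: "d > 0" "\<And>y. 0 < y \<Longrightarrow> y < d \<Longrightarrow> b * (exp (y * x0) - 1) * Ar < \<epsilon>^2/16 \<and> exp (y * x0) * Ar < Ar + \<epsilon>/2"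
    unfolding eventually_at_right_field by auto
  define \<gamma> where "\<gamma> = d / 2"
  have \<gamma>0: "0 < \<gamma>" and \<gamma>1: "b * (exp (\<gamma> * x0) - 1) * Ar < \<epsilon>^2/16" and \<gamma>2: "exp (\<gamma> * x0) * Ar < Ar + \<epsilon>/2"
    using d(2)[of \<gamma>] d(1) unfolding \<gamma>_def by auto
  define s where "s X = integral {0..X} (g \<gamma>)" for X
  have Ns: "N \<gamma> X = ennreal (s X)" for X unfolding s_def using N_HK \<gamma>0 by simp
  have snn: "0 \<le> s X" for X unfolding s_def by (rule integral_nonneg[OF g_int]) (use \<gamma>0 g_nonneg in auto)
  have "ennreal (s x0) \<le> ennreal (exp (\<gamma> * x0)) * ennreal Cx" using N_exp[of \<gamma> x0] \<gamma>0 Ns NCx by simp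
  then have "s x0 \<le> exp (\<gamma> * x0) * Cx" using Cxnn by (simp add: ennreal_mult[symmetric])
  then have sx0: "s x0 \<le> exp (\<gamma> * x0) * Ar" using Cxhi by (smt (verit) exp_gt_zero mult_left_mono)
  have "ennreal (b/2) < (SUP n::nat. N \<gamma> (real n))" by (subst N_heavy[OF ht \<gamma>0]) simp
  then obtain n1 :: nat where n1: "ennreal (b/2) < N \<gamma> (real n1)" unfolding less_SUP_iff by blast
  define X1 where "X1 = max x0 (real n1)"
  have X1: "x0 \<le> X1" "real n1 \<le> X1" unfolding X1_def by auto
  have "ennreal (b/2) < ennreal (s X1)" using n1 N_mono[OF X1(2), of \<gamma>] Ns by (metis order_less_le_trans)
  then have sX1: "b/2 \<le> s X1" using b1 Ar0 by (simp add: ennreal_less_iff)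
  have "Ar + \<epsilon>/2 = b/2" unfolding \<epsilon>_def by (simp add: field_simps)
  then have "b/2 > s x0" using sx0 \<gamma>2 by linarith
  have cont: "continuous_on {0..X1} s" unfolding s_def
    by (rule indefinite_integral_continuous_1[OF g_int]) (use \<gamma>0 in simp)
  have "continuous_on {x0..X1} s" using x0(1) by (intro continuous_on_subset[OF cont]) auto
  then obtain X where X: "x0 \<le> X" "X \<le> X1" "s X = b/2"
    using IVT'[of s x0 "b/2" X1] \<open>b/2 > s x0\<close> sX1 X1(1) by auto
  define M where "M = (\<integral>\<^sup>+t. ennreal (g \<gamma> t) * indicator {x0<..X} t \<partial>lborel)"
  have "N \<gamma> X = (\<integral>\<^sup>+t. ennreal (g \<gamma> t) * indicator {0..x0} t + ennreal (g \<gamma> t) * indicator {x0<..X} t \<partial>lborel)"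
    unfolding N_def using X(1) x0(1) by (intro nn_integral_cong) (auto split: split_indicator)
  also have "\<dots> = N \<gamma> x0 + M" unfolding N_def M_def by (subst nn_integral_add) auto
  finally have "ennreal (b/2) = ennreal (s x0) + M" using Ns X(3) by simp
  then have "M = ennreal (b/2) - ennreal (s x0)"
    using ennreal_add_diff_cancel_left[of "ennreal (s x0)" M] by simp
  then have MM: "M = ennreal (b/2 - s x0)"
    using snn[of x0] by (simp add: ennreal_minus)
  let ?Q = "\<integral>\<^sup>+x. J \<gamma> x * indicator {0..X} x \<partial>lborel"
  have "?Q = (\<integral>\<^sup>+x. J \<gamma> x * indicator {0..x0} x + J \<gamma> x * indicator {x0<..X} x \<partial>lborel)"
    using X(1) x0(1) by (intro nn_integral_cong) (auto split: split_indicator)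
  also have "\<dots> = (\<integral>\<^sup>+x. J \<gamma> x * indicator {0..x0} x \<partial>lborel) + (\<integral>\<^sup>+x. J \<gamma> x * indicator {x0<..X} x \<partial>lborel)"
    by (subst nn_integral_add) auto
  finally have Qsplit: "?Q = (\<integral>\<^sup>+x. J \<gamma> x * indicator {0..x0} x \<partial>lborel) + (\<integral>\<^sup>+x. J \<gamma> x * indicator {x0<..X} x \<partial>lborel)" .
  have "ennreal (c0^2) = (N 0 (x0/2))^2" using Nc0 c0nn by (simp add: ennreal_power)
  also have "\<dots> \<le> (\<integral>\<^sup>+x. J 0 x * indicator {0..x0} x \<partial>lborel)" by (rule conv_lower)
  also have "\<dots> \<le> (\<integral>\<^sup>+x. J \<gamma> x * indicator {0..x0} x \<partial>lborel)"
    using \<gamma>0 by (intro nn_integral_mono) (auto intro: J_mono split: split_indicator)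
  finally have P1: "ennreal (c0^2) \<le> (\<integral>\<^sup>+x. J \<gamma> x * indicator {0..x0} x \<partial>lborel)" .
  have "ennreal b * M = (\<integral>\<^sup>+x. ennreal b * (ennreal (g \<gamma> x) * indicator {x0<..X} x) \<partial>lborel)"
    unfolding M_def by (subst nn_integral_cmult) auto
  also have "\<dots> \<le> (\<integral>\<^sup>+x. J \<gamma> x * indicator {x0<..X} x \<partial>lborel)"
  proof (intro nn_integral_mono)
    fix x
    show "ennreal b * (ennreal (g \<gamma> x) * indicator {x0<..X} x) \<le> J \<gamma> x * indicator {x0<..X} x"
    proof (cases "x \<in> {x0<..X}")
      case True
      then have xx: "x1 \<le> x" "0 \<le> x" using x0 by auto
      have "b * f x \<le> I x" using bI[OF xx(1)] by simp
      then have "exp (\<gamma> * x) * (b * f x) \<le> exp (\<gamma> * x) * I x" by simp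
      then have "ennreal (b * g \<gamma> x) \<le> ennreal (exp (\<gamma> * x)) * ennreal (I x)"
        unfolding g_def using I_nonneg[of x] by (simp add: ennreal_mult[symmetric] mult_ac)
      also have "\<dots> = J \<gamma> x" using Jg[of \<gamma> x] J0_I[OF xx(2)] by simp
      finally show ?thesis using True b1 Ar0 g_nonneg[of \<gamma> x] by (simp add: ennreal_mult)
    qed simp
  qed
  finally have P2: "ennreal b * M \<le> (\<integral>\<^sup>+x. J \<gamma> x * indicator {x0<..X} x \<partial>lborel)" .
  have bpos: "0 < b" using b1 Ar0 by simp
  have m0: "0 \<le> b/2 - s x0" using \<open>b/2 > s x0\<close> by simp
  have "ennreal b * M = ennreal (b * (b/2 - s x0))"
    unfolding MM using ennreal_mult[OF less_imp_le[OF bpos] m0] by simp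
  moreover have "ennreal (c0^2 + b * (b/2 - s x0)) = ennreal (c0^2) + ennreal (b * (b/2 - s x0))"
    by (rule ennreal_plus) (use bpos m0 in auto)
  ultimately have "ennreal (c0^2 + b * (b/2 - s x0)) = ennreal (c0^2) + ennreal b * M" by simp
  also have "\<dots> \<le> ?Q" unfolding Qsplit by (rule add_mono[OF P1 P2])
  also have "\<dots> \<le> (N \<gamma> X)^2" by (rule conv_upper)
  also have "\<dots> = ennreal ((b/2)^2)" unfolding Ns X(3) using bpos by (intro ennreal_power) simp
  finally have key0: "ennreal (c0^2 + b * (b/2 - s x0)) \<le> ennreal ((b/2)^2)" .
  have key: "c0^2 + b * (b/2 - s x0) \<le> (b/2)^2"
    using key0 ennreal_le_iff[of "(b/2)^2" "c0^2 + b * (b/2 - s x0)"] by simp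
  have e1: "b * s x0 \<le> b * (exp (\<gamma> * x0) * Ar)" using sx0 bpos by simp
  have e2: "b * (exp (\<gamma> * x0) * Ar) < b * Ar + \<epsilon>^2/16" using \<gamma>1 by (simp add: algebra_simps)
  have e3: "Ar^2 - c0^2 \<le> 2 * Ar * \<delta>"
  proof -
    have "Ar^2 - c0^2 = (Ar - c0) * (Ar + c0)" by (simp add: power2_eq_square algebra_simps)
    also have "\<dots> \<le> \<delta> * (2 * Ar)" using c0lo c0hi c0nn \<delta>0 by (intro mult_mono) auto
    finally show ?thesis by (simp add: mult_ac)
  qed
  have e4: "2 * Ar * \<delta> \<le> \<epsilon>^2/8"
  proof -
    have "2 * Ar * \<delta> = \<epsilon>^2 * (2 * Ar / (16 * Ar + 16))" unfolding \<delta>_def by simp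
    also have "\<dots> \<le> \<epsilon>^2 * (1/8)"
      using Ar0 by (intro mult_left_mono) (auto simp: field_simps)
    finally show ?thesis by simp
  qed
  have bdef: "b = 2 * Ar + \<epsilon>" unfolding \<epsilon>_def by simp
  have f1: "b * (b/2 - s x0) = b^2/2 - b * s x0" by (simp add: power2_eq_square algebra_simps)
  have f2: "(b/2)^2 = b^2/4" by (simp add: power2_eq_square)
  have f3: "b^2 = 4 * Ar^2 + 4 * (Ar * \<epsilon>) + \<epsilon>^2" unfolding bdef by (simp add: power2_eq_square algebra_simps)
  have f4: "b * Ar = 2 * Ar^2 + Ar * \<epsilon>" unfolding bdef by (simp add: power2_eq_square algebra_simps)
  have "0 < \<epsilon>^2" using \<epsilon>0 by simp
  then show False using key e1 e2 e3 e4 f1 f2 f3 f4 by linarith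
qed

end

theorem lemma4:
  fixes F :: "real measure"
  assumes "prob_space F"
    and "sets F = sets borel"
    and "emeasure F {..<0} = 0"
    and "\<And>x. Fbar F x > 0"
    and "heavy_tailed F"
    and "mean F > 0"
  shows "Liminf at_top (\<lambda>x. ereal (integral {0..x} (\<lambda>y. Fbar F (x - y) * Fbar F y) / Fbar F x))
           = 2 * enn2ereal (mean F)"
proof -
  interpret tailsetup F by (rule tailsetup.intro) (use assms in auto)
  have eq: "(\<lambda>x. ereal (integral {0..x} (\<lambda>y. Fbar F (x - y) * Fbar F y) / Fbar F x)) = (\<lambda>x. ereal (I x / f x))"
    by (simp add: I_def)
  have low: "2 * enn2ereal (mean F) \<le> Liminf at_top (\<lambda>x. ereal (I x / f x))"
    by (rule liminf_lower) (use assms in auto)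
  show ?thesis
  proof (cases "mean F = top")
    case True
    then show ?thesis using low unfolding eq by (simp add: top_unique)
  next
    case False
    define Ar where "Ar = enn2real (mean F)"
    have mF: "mean F = ennreal Ar" using False unfolding Ar_def by (simp add: less_top)
    have Ar0: "0 \<le> Ar" unfolding Ar_def by simp
    have up: "Liminf at_top (\<lambda>x. ereal (I x / f x)) \<le> ereal (2 * Ar)"
      by (rule liminf_upper[OF _ _ mF Ar0]) (use assms in auto)
    have "2 * enn2ereal (mean F) = ereal (2 * Ar)" using mF Ar0 by simp
    then show ?thesis using low up unfolding eq by simp
  qed
qed

end
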